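(* Let $p\in(0,1)$, let $X,\gamma$ satisfy the standing assumptions in the context, and let $0\le x_0<\mathbb E[\gamma X]$. Then the problem of minimizing $\mathrm{VaR}_p(g(X))$ over $g\in\mathcal G_{\rm ns}$ admits at least one solution, and $\mathrm{VaR}_p(X)>q$, where $q=\inf\{\mathrm{VaR}_p(g(X)):g\in\mathcal G_{\rm ns}\}$.
   Context: $(\Omega,\mathcal F,\mathbb P)$ is atomless. $\mathrm{VaR}_p(Y)=\inf\{x:\mathbb P(Y\le x)\ge p\}$. Standing assumptions: $X\ge0$ is a random variable whose distribution has a positive density on its support; $\gamma:\mathbb R\to\mathbb R$ is continuous and strictly positive; $\gamma$ also denotes $\gamma(X)$; $\mathbb E[\gamma]=1$, $\mathbb E[\gamma X]<\infty$. With $\mathcal G_1$ the measurable functions $\mathbb R\to\mathbb R$, $\mathcal G_{\rm ns}=\{g\in\mathcal G_1:\mathbb E[\gamma g(X)]\ge x_0,\ 0\le g(X)\le X\}$. *)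

theory Defs
  imports "HOL-Probability.Probability"
begin

definition atomless :: "'a measure \<Rightarrow> bool" where
  "atomless M \<longleftrightarrow> (\<forall>A\<in>sets M. measure M A > 0 \<longrightarrow>
      (\<exists>B\<in>sets M. B \<subseteq> A \<and> 0 < measure M B \<and> measure M B < measure M A))"

definition VaR :: "'a measure \<Rightarrow> real \<Rightarrow> ('a \<Rightarrow> real) \<Rightarrow> real" where
  "VaR M p Y = Inf {x::real. measure M {\<omega>\<in>space M. Y \<omega> \<le> x} \<ge> p}"

definition dist_support :: "'a measure \<Rightarrow> ('a \<Rightarrow> real) \<Rightarrow> real set" where
  "dist_support M X = {x. \<forall>e>0. measure M {\<omega>\<in>space M. X \<omega> \<in> ball x e} > 0}"

definition G_ns :: "'a measure \<Rightarrow> (real \<Rightarrow> real) \<Rightarrow> ('a \<Rightarrow> real) \<Rightarrow> real \<Rightarrow> (real \<Rightarrow> real) set" where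
  "G_ns M \<gamma> X x0 = {g. g \<in> borel_measurable borel \<and>
      integral\<^sup>L M (\<lambda>\<omega>. \<gamma> (X \<omega>) * g (X \<omega>)) \<ge> x0 \<and>
      (AE \<omega> in M. 0 \<le> g (X \<omega>) \<and> g (X \<omega>) \<le> X \<omega>)}"

end

theory Submission imports Defs begin

context prob_space begin

lemma cdf_gt:
  fixes Y :: "'a \<Rightarrow> real" assumes Y: "Y \<in> borel_measurable M" and r: "r < 1"
  shows "\<exists>x. measure M {\<omega>\<in>space M. Y \<omega> \<le> x} > r"
proof -
  define A where "A n = {\<omega>\<in>space M. Y \<omega> \<le> real n}" for n
  have "range A \<subseteq> sets M" unfolding A_def using Y by auto
  moreover have "incseq A" unfolding A_def incseq_def by auto
  moreover have "(\<Union>i. A i) = space M"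
    unfolding A_def by (auto, meson real_arch_simple)
  ultimately have "(\<lambda>i. measure M (A i)) \<longlonglongrightarrow> 1"
    using Lim_measure_incseq[of A M] prob_space by simp
  then have "\<forall>\<^sub>F i in sequentially. r < measure M (A i)"
    using r by (rule order_tendstoD)
  then obtain i where "r < measure M (A i)" by (meson eventually_sequentially order_refl)
  then show ?thesis unfolding A_def by blast
qed

lemma VaR_facts:
  fixes Y :: "'a \<Rightarrow> real" assumes Y: "Y \<in> borel_measurable M" and nn: "AE \<omega> in M. 0 \<le> Y \<omega>"
    and p: "0 < p" "p < 1"
  shows VaR_ne: "{x. p \<le> measure M {\<omega>\<in>space M. Y \<omega> \<le> x}} \<noteq> {}"
    and VaR_S_nonneg: "p \<le> measure M {\<omega>\<in>space M. Y \<omega> \<le> x} \<Longrightarrow> 0 \<le> x"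
    and VaR_up: "p \<le> measure M {\<omega>\<in>space M. Y \<omega> \<le> x} \<Longrightarrow> x \<le> y \<Longrightarrow> p \<le> measure M {\<omega>\<in>space M. Y \<omega> \<le> y}"
    and VaR_nonneg: "0 \<le> VaR M p Y"
    and VaR_le: "p \<le> measure M {\<omega>\<in>space M. Y \<omega> \<le> c} \<Longrightarrow> VaR M p Y \<le> c"
    and VaR_less: "VaR M p Y < c \<Longrightarrow> p \<le> measure M {\<omega>\<in>space M. Y \<omega> \<le> c}"
proof -
  let ?S = "{x. p \<le> measure M {\<omega>\<in>space M. Y \<omega> \<le> x}}"
  show ne: "?S \<noteq> {}" using cdf_gt[OF Y p(2)] by (auto intro: less_imp_le)
  have nonneg: "0 \<le> x" if "p \<le> measure M {\<omega>\<in>space M. Y \<omega> \<le> x}" for x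
  proof (rule ccontr)
    assume "\<not> 0 \<le> x"
    have "AE \<omega> in M. \<omega> \<notin> {\<omega>\<in>space M. Y \<omega> \<le> x}"
      using nn by eventually_elim (use \<open>\<not> 0 \<le> x\<close> in auto)
    then have "measure M {\<omega>\<in>space M. Y \<omega> \<le> x} = 0"
      using prob_eq_0[of "{\<omega>\<in>space M. Y \<omega> \<le> x}"] Y by auto
    then show False using that p by simp
  qed
  then show "p \<le> measure M {\<omega>\<in>space M. Y \<omega> \<le> x} \<Longrightarrow> 0 \<le> x" .
  have up: "p \<le> measure M {\<omega>\<in>space M. Y \<omega> \<le> y}"
    if "p \<le> measure M {\<omega>\<in>space M. Y \<omega> \<le> x}" "x \<le> y" for x y
  proof -
    have "measure M {\<omega>\<in>space M. Y \<omega> \<le> x} \<le> measure M {\<omega>\<in>space M. Y \<omega> \<le> y}"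
      by (rule finite_measure_mono) (use Y that(2) in auto)
    then show ?thesis using that by linarith
  qed
  then show "p \<le> measure M {\<omega>\<in>space M. Y \<omega> \<le> x} \<Longrightarrow> x \<le> y \<Longrightarrow> p \<le> measure M {\<omega>\<in>space M. Y \<omega> \<le> y}" .
  have bdd: "bdd_below ?S" using nonneg by (auto intro!: bdd_belowI[of _ 0])
  show "0 \<le> VaR M p Y" unfolding VaR_def
    using ne nonneg by (auto intro!: cInf_greatest)
  show "p \<le> measure M {\<omega>\<in>space M. Y \<omega> \<le> c} \<Longrightarrow> VaR M p Y \<le> c"
    unfolding VaR_def by (rule cInf_lower[OF _ bdd]) simp
  show "VaR M p Y < c \<Longrightarrow> p \<le> measure M {\<omega>\<in>space M. Y \<omega> \<le> c}"
    proof -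
    assume "VaR M p Y < c"
    then have "\<exists>x\<in>?S. x < c" unfolding VaR_def using cInf_less_iff[OF ne bdd] by simp
    then obtain x where "x \<in> ?S" "x < c" by blast
    then show ?thesis using up[of x c] by auto
  qed
qed


lemma VaR_attained:
  fixes Y :: "'a \<Rightarrow> real" assumes Y: "Y \<in> borel_measurable M" and nn: "AE \<omega> in M. 0 \<le> Y \<omega>"
    and p: "0 < p" "p < 1"
  shows "p \<le> measure M {\<omega>\<in>space M. Y \<omega> \<le> VaR M p Y}"
proof -
  define v where "v = VaR M p Y"
  define A where "A n = {\<omega>\<in>space M. Y \<omega> \<le> v + inverse (real (Suc n))}" for n
  have "range A \<subseteq> sets M" unfolding A_def using Y by auto
  moreover have "decseq A" unfolding A_def decseq_def
  proof (clarsimp)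
    fix m n x assume "m \<le> n" "Y x \<le> v + inverse (1 + real n)"
    moreover have "inverse (1 + real n) \<le> inverse (1 + real m)"
      using \<open>m \<le> n\<close> by (intro le_imp_inverse_le) auto
    ultimately show "Y x \<le> v + inverse (1 + real m)" by linarith
  qed
  moreover have "(\<Inter>i. A i) = {\<omega>\<in>space M. Y \<omega> \<le> v}"
  proof (rule set_eqI, rule iffI)
    fix \<omega> assume "\<omega> \<in> (\<Inter>i. A i)"
    then have sp: "\<omega> \<in> space M" and h: "\<And>n. Y \<omega> \<le> v + inverse (real (Suc n))"
      unfolding A_def by auto
    have "Y \<omega> \<le> v"
    proof (rule ccontr)
      assume "\<not> Y \<omega> \<le> v"
      then have "0 < Y \<omega> - v" by simp
      then obtain n where "inverse (real (Suc n)) < Y \<omega> - v" using reals_Archimedean by blast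
      with h[of n] show False by linarith
    qed
    then show "\<omega> \<in> {\<omega>\<in>space M. Y \<omega> \<le> v}" using sp by simp
  next
    fix \<omega> assume "\<omega> \<in> {\<omega>\<in>space M. Y \<omega> \<le> v}"
    moreover have "0 \<le> inverse (real (Suc n))" for n by simp
    ultimately show "\<omega> \<in> (\<Inter>i. A i)" unfolding A_def by (auto intro: add_increasing2)
  qed
  ultimately have lim: "(\<lambda>i. measure M (A i)) \<longlonglongrightarrow> measure M {\<omega>\<in>space M. Y \<omega> \<le> v}"
    using Lim_measure_decseq[of A M] by simp
  have "p \<le> measure M (A n)" for n
  proof -
    have "VaR M p Y < v + inverse (real (Suc n))" unfolding v_def by simp
    then show ?thesis unfolding A_def by (rule VaR_less[OF Y nn p])
  qed
  then show ?thesis using LIMSEQ_le_const[OF lim] unfolding v_def by blast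
qed

lemma VaR_strict:
  fixes Y :: "'a \<Rightarrow> real" assumes Y: "Y \<in> borel_measurable M" and nn: "AE \<omega> in M. 0 \<le> Y \<omega>"
    and p: "0 < p" "p < 1"
  shows "measure M {\<omega>\<in>space M. Y \<omega> < VaR M p Y} \<le> p"
proof -
  define v where "v = VaR M p Y"
  define A where "A n = {\<omega>\<in>space M. Y \<omega> \<le> v - inverse (real (Suc n))}" for n
  have "range A \<subseteq> sets M" unfolding A_def using Y by auto
  moreover have "incseq A" unfolding A_def incseq_def
  proof (clarsimp)
    fix m n x assume "m \<le> n" "Y x \<le> v - inverse (1 + real m)"
    moreover have "inverse (1 + real n) \<le> inverse (1 + real m)"
      using \<open>m \<le> n\<close> by (intro le_imp_inverse_le) auto
    ultimately show "Y x \<le> v - inverse (1 + real n)" by linarith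
  qed
  moreover have "(\<Union>i. A i) = {\<omega>\<in>space M. Y \<omega> < v}"
  proof (rule set_eqI, rule iffI)
    fix \<omega> assume "\<omega> \<in> {\<omega>\<in>space M. Y \<omega> < v}"
    then have sp: "\<omega> \<in> space M" and "0 < v - Y \<omega>" by auto
    then obtain n where "inverse (real (Suc n)) < v - Y \<omega>" using reals_Archimedean by blast
    then have "\<omega> \<in> A n" unfolding A_def using sp by simp
    then show "\<omega> \<in> (\<Union>i. A i)" by blast
  next
    fix \<omega> assume "\<omega> \<in> (\<Union>i. A i)"
    then obtain n where "\<omega> \<in> A n" by blast
    then have "\<omega> \<in> space M" "Y \<omega> \<le> v - inverse (real (Suc n))" unfolding A_def by auto
    moreover have "0 < inverse (real (Suc n))" by simp
    ultimately have "\<omega> \<in> space M" "Y \<omega> < v" by linarith+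
    then show "\<omega> \<in> {\<omega>\<in>space M. Y \<omega> < v}" by simp
  qed
  ultimately have lim: "(\<lambda>i. measure M (A i)) \<longlonglongrightarrow> measure M {\<omega>\<in>space M. Y \<omega> < v}"
    using Lim_measure_incseq[of A M] by simp
  have "measure M (A n) \<le> p" for n
  proof (rule ccontr)
    assume "\<not> measure M (A n) \<le> p"
    then have "v \<le> v - inverse (real (Suc n))"
      unfolding A_def v_def by (intro VaR_le[OF Y nn p]) simp
    then show False by simp
  qed
  then show ?thesis using LIMSEQ_le_const2[OF lim] unfolding v_def by blast
qed

lemma no_atom:
  fixes X :: "'a \<Rightarrow> real"
  assumes "distributed M lborel X f"
  shows "measure M {\<omega>\<in>space M. X \<omega> = s} = 0"
proof -
  have "emeasure M (X -` {s} \<inter> space M) = (\<integral>\<^sup>+x. f x * indicator {s} x \<partial>lborel)"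
    using distributed_emeasure[OF assms] by simp
  also have "\<dots> = 0"
    by (rule nn_integral_null_set) (simp add: null_sets_def)
  finally have "emeasure M (X -` {s} \<inter> space M) = 0" by simp
  moreover have "X -` {s} \<inter> space M = {\<omega>\<in>space M. X \<omega> = s}" by auto
  ultimately show ?thesis unfolding measure_def by (metis enn2real_0)
qed


lemma NP_set:
  fixes X :: "'a \<Rightarrow> real" and w :: "real \<Rightarrow> real"
  assumes X: "X \<in> borel_measurable M" and Xnn: "\<forall>\<omega>\<in>space M. 0 \<le> X \<omega>"
    and dist: "distributed M lborel X f"
    and w: "w \<in> borel_measurable borel" and wnn: "\<forall>x. 0 \<le> w x"
    and p: "0 < p" "p < 1"
  shows "\<exists>D\<in>sets borel. \<exists>k\<ge>0. measure M {\<omega>\<in>space M. X \<omega> \<in> D} = p \<and>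
           (\<forall>x\<in>D. w x \<le> k) \<and> (\<forall>x. x \<notin> D \<longrightarrow> k \<le> w x)"
proof -
  define W where "W \<omega> = w (X \<omega>)" for \<omega>
  have Wm: "W \<in> borel_measurable M" unfolding W_def using w X by measurable
  have Wnn: "AE \<omega> in M. 0 \<le> W \<omega>" unfolding W_def using wnn by simp
  define k where "k = VaR M p W"
  have k0: "0 \<le> k" unfolding k_def by (rule VaR_nonneg[OF Wm Wnn p])
  have h1: "p \<le> measure M {\<omega>\<in>space M. W \<omega> \<le> k}"
    unfolding k_def by (rule VaR_attained[OF Wm Wnn p])
  have h2: "measure M {\<omega>\<in>space M. W \<omega> < k} \<le> p"
    unfolding k_def by (rule VaR_strict[OF Wm Wnn p])
  show ?thesis
  proof (cases "measure M {\<omega>\<in>space M. W \<omega> \<le> k} = p")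
    case True
    show ?thesis
    proof (intro bexI[of _ "{x. w x \<le> k}"] exI[of _ k] conjI)
      show "{x. w x \<le> k} \<in> sets borel" using w by measurable
      show "measure M {\<omega> \<in> space M. X \<omega> \<in> {x. w x \<le> k}} = p" using True by (simp add: W_def)
    qed (use k0 in auto)
  next
    case False
    then have gt: "p < measure M {\<omega>\<in>space M. W \<omega> \<le> k}" using h1 by simp
    define E where "E s = {x. w x < k \<or> (w x = k \<and> x \<le> s)}" for s
    have Eb: "E s \<in> sets borel" for s unfolding E_def using w by measurable
    define A where "A s = {\<omega>\<in>space M. X \<omega> \<in> E s}" for s
    have As: "A s \<in> sets M" for s unfolding A_def using Eb X by measurable
    define \<phi> where "\<phi> s = measure M (A s)" for s
    define F where "F s = measure M {\<omega>\<in>space M. X \<omega> \<le> s}" for s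
    have Fs: "{\<omega>\<in>space M. X \<omega> \<le> s} \<in> sets M" for s using X by measurable
    have bound: "\<phi> s' - \<phi> s \<le> F s' - F s" "\<phi> s \<le> \<phi> s'" if "s \<le> s'" for s s'
    proof -
      have sub: "A s \<subseteq> A s'" unfolding A_def E_def using that by auto
      have "\<phi> s' - \<phi> s = measure M (A s' - A s)"
        unfolding \<phi>_def using sub As by (simp add: finite_measure_Diff)
      also have "\<dots> \<le> measure M ({\<omega>\<in>space M. X \<omega> \<le> s'} - {\<omega>\<in>space M. X \<omega> \<le> s})"
        by (rule finite_measure_mono) (use Fs in \<open>auto simp: A_def E_def\<close>)
      also have "\<dots> = F s' - F s"
        unfolding F_def using Fs that by (subst finite_measure_Diff) auto
      finally show "\<phi> s' - \<phi> s \<le> F s' - F s" .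
      show "\<phi> s \<le> \<phi> s'" unfolding \<phi>_def using sub As by (simp add: finite_measure_mono)
    qed
    have Fcont: "isCont F s" for s
    proof -
      interpret R: real_distribution "distr M borel X" using X by simp
      have "measure (distr M borel X) {s} = measure M {\<omega>\<in>space M. X \<omega> = s}"
        using X by (subst measure_distr) (auto intro!: arg_cong[where f="measure M"])
      also have "\<dots> = 0" by (rule no_atom[OF dist])
      finally have "isCont (cdf (distr M borel X)) s" by (simp add: R.isCont_cdf)
      moreover have "cdf (distr M borel X) = F"
        unfolding F_def cdf_def using X by (auto simp: measure_distr intro!: arg_cong[where f="measure M"])
      ultimately show ?thesis by simp
    qed
    have phicont: "isCont \<phi> s" for s
    proof -
      have "\<bar>\<phi> x - \<phi> s\<bar> \<le> \<bar>F x - F s\<bar>" for x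
        using bound[of x s] bound[of s x] by (cases "x \<le> s") auto
      moreover have "F \<midarrow>s\<rightarrow> F s" using Fcont[of s] by (simp add: isCont_def)
      ultimately have "\<phi> \<midarrow>s\<rightarrow> \<phi> s"
        unfolding LIM_eq by (metis (no_types, lifting) le_less_trans real_norm_def)
      then show ?thesis by (simp add: isCont_def)
    qed
    obtain b where b: "F b > 1 - (measure M {\<omega>\<in>space M. W \<omega> \<le> k} - p)"
      using cdf_gt[OF X, of "1 - (measure M {\<omega>\<in>space M. W \<omega> \<le> k} - p)"] gt
      unfolding F_def by auto
    have "measure M {\<omega>\<in>space M. W \<omega> \<le> k} \<le> measure M (A b \<union> (space M - {\<omega>\<in>space M. X \<omega> \<le> b}))"
      by (rule finite_measure_mono) (use As Fs in \<open>auto simp: A_def E_def W_def\<close>)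
    also have "\<dots> \<le> \<phi> b + measure M (space M - {\<omega>\<in>space M. X \<omega> \<le> b})"
      unfolding \<phi>_def using As Fs by (intro measure_Un_le) auto
    also have "measure M (space M - {\<omega>\<in>space M. X \<omega> \<le> b}) = 1 - F b"
      unfolding F_def using Fs by (rule prob_compl)
    finally have phib: "p \<le> \<phi> b" using b by simp
    define a where "a = min (-1) b"
    have "A a = {\<omega>\<in>space M. W \<omega> < k}"
      unfolding A_def E_def W_def a_def using Xnn by force
    then have phia: "\<phi> a \<le> p" using h2 unfolding \<phi>_def by simp
    obtain s where "\<phi> s = p"
      using IVT'[of \<phi> a p b] phia phib phicont unfolding a_def
      by (auto intro!: continuous_at_imp_continuous_on)
    show ?thesis
    proof (intro bexI[of _ "E s"] exI[of _ k] conjI)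
      show "measure M {\<omega> \<in> space M. X \<omega> \<in> E s} = p" using \<open>\<phi> s = p\<close> unfolding \<phi>_def A_def .
    qed (use k0 Eb in \<open>auto simp: E_def\<close>)
  qed
qed

end

theorem lemma1:
  fixes M :: "'a measure" and X :: "'a \<Rightarrow> real" and \<gamma> :: "real \<Rightarrow> real"
    and f :: "real \<Rightarrow> ennreal" and p x0 :: real
  assumes "prob_space M" and "atomless M"
    and "p \<in> {0<..<1}"
    and "X \<in> borel_measurable M" and "\<forall>\<omega>\<in>space M. X \<omega> \<ge> 0"
    and "distributed M lborel X f" and "\<forall>x\<in>dist_support M X. f x > 0"
    and "continuous_on UNIV \<gamma>" and "\<forall>x. \<gamma> x > 0"
    and "integrable M (\<lambda>\<omega>. \<gamma> (X \<omega>))" and "integral\<^sup>L M (\<lambda>\<omega>. \<gamma> (X \<omega>)) = 1"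
    and "integrable M (\<lambda>\<omega>. \<gamma> (X \<omega>) * X \<omega>)"
    and "0 \<le> x0" and "x0 < integral\<^sup>L M (\<lambda>\<omega>. \<gamma> (X \<omega>) * X \<omega>)"
  shows "(\<exists>g\<in>G_ns M \<gamma> X x0. \<forall>h\<in>G_ns M \<gamma> X x0.
            VaR M p (\<lambda>\<omega>. g (X \<omega>)) \<le> VaR M p (\<lambda>\<omega>. h (X \<omega>)))
       \<and> VaR M p X > Inf ((\<lambda>g. VaR M p (\<lambda>\<omega>. g (X \<omega>))) ` G_ns M \<gamma> X x0)"
proof -
  interpret prob_space M by fact
  have p: "0 < p" "p < 1" using assms(3) by auto
  have X: "X \<in> borel_measurable M" by fact
  have Xnn: "\<forall>\<omega>\<in>space M. 0 \<le> X \<omega>" by fact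
  have gb: "\<gamma> \<in> borel_measurable borel" using assms(8) by (rule borel_measurable_continuous_onI)
  have gpos: "\<And>x. 0 < \<gamma> x" using assms(9) by simp
  have intGX: "integrable M (\<lambda>\<omega>. \<gamma> (X \<omega>) * X \<omega>)" by fact
  have intG: "integrable M (\<lambda>\<omega>. \<gamma> (X \<omega>))" by fact
  have Eg: "integral\<^sup>L M (\<lambda>\<omega>. \<gamma> (X \<omega>)) = 1" by fact
  define IX where "IX = integral\<^sup>L M (\<lambda>\<omega>. \<gamma> (X \<omega>) * X \<omega>)"
  have x0IX: "x0 < IX" using assms(14) unfolding IX_def .
  have intb: "integrable M h" if hm: "h \<in> borel_measurable M"
    and hb: "AE \<omega> in M. \<bar>h \<omega>\<bar> \<le> \<gamma> (X \<omega>) * X \<omega>" for h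
  proof (rule Bochner_Integration.integrable_bound[OF intGX hm])
    show "AE \<omega> in M. norm (h \<omega>) \<le> norm (\<gamma> (X \<omega>) * X \<omega>)"
      using hb by eventually_elim auto
  qed
  let ?G = "G_ns M \<gamma> X x0"
  let ?V = "\<lambda>g. VaR M p (\<lambda>\<omega>. g (X \<omega>))"
  have Gm: "(\<lambda>\<omega>. g (X \<omega>)) \<in> borel_measurable M" if "g \<in> ?G" for g
    using that X unfolding G_ns_def by auto
  have Gnn: "AE \<omega> in M. 0 \<le> g (X \<omega>)" if "g \<in> ?G" for g
    using that unfolding G_ns_def by (auto elim!: eventually_mono)
  have idG: "(\<lambda>x. x) \<in> ?G"
    unfolding G_ns_def using assms(14) Xnn by auto
  have V0: "0 \<le> ?V g" if "g \<in> ?G" for g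
    by (rule VaR_nonneg[OF Gm[OF that] Gnn[OF that] p])
  define q where "q = Inf (?V ` ?G)"
  have Vne: "?V ` ?G \<noteq> {}" using idG by blast
  have Vbdd: "bdd_below (?V ` ?G)" using V0 by (auto intro!: bdd_belowI[of _ 0])
  have q_le: "q \<le> ?V g" if "g \<in> ?G" for g
    unfolding q_def using that Vbdd by (auto intro!: cInf_lower)
  have q0: "0 \<le> q" unfolding q_def using Vne V0 by (auto intro!: cInf_greatest)
  define w where "w x = \<gamma> x * max (x - q) 0" for x
  have wb: "w \<in> borel_measurable borel" unfolding w_def using gb by measurable
  have wnn: "\<forall>x. 0 \<le> w x" unfolding w_def using gpos by (simp add: less_imp_le)
  obtain D k where Db: "D \<in> sets borel" and k0: "0 \<le> k"
    and PD: "measure M {\<omega>\<in>space M. X \<omega> \<in> D} = p"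
    and wD: "\<forall>x\<in>D. w x \<le> k" and wnD: "\<forall>x. x \<notin> D \<longrightarrow> k \<le> w x"
    using NP_set[OF X Xnn assms(6) wb wnn p] by blast
  define A where "A = {\<omega>\<in>space M. X \<omega> \<in> D}"
  have As: "A \<in> sets M" unfolding A_def using Db X by measurable
  have wX_le: "\<bar>w (X \<omega>)\<bar> \<le> \<gamma> (X \<omega>) * X \<omega>" if "\<omega> \<in> space M" for \<omega>
  proof -
    have "0 \<le> X \<omega>" using Xnn that by auto
    then have "max (X \<omega> - q) 0 \<le> X \<omega>" using q0 by simp
    then show ?thesis using gpos[of "X \<omega>"] wnn unfolding w_def
      by (simp add: mult_left_mono less_imp_le)
  qed
  have intWB: "integrable M (\<lambda>\<omega>. w (X \<omega>) * indicator B \<omega>)" if "B \<in> sets M" for B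
  proof (rule intb)
    show "(\<lambda>\<omega>. w (X \<omega>) * indicator B \<omega>) \<in> borel_measurable M" using that wb X by measurable
    show "AE \<omega> in M. \<bar>w (X \<omega>) * indicator B \<omega>\<bar> \<le> \<gamma> (X \<omega>) * X \<omega>"
      using wX_le by (auto simp: indicator_def intro!: AE_I2)
         (smt (verit, best) gpos mult_nonneg_nonneg Xnn)
  qed
  \<comment> \<open>Neyman--Pearson optimality of A\<close>
  have NP: "integral\<^sup>L M (\<lambda>\<omega>. w (X \<omega>) * indicator A \<omega>) \<le> integral\<^sup>L M (\<lambda>\<omega>. w (X \<omega>) * indicator B \<omega>)"
    if Bs: "B \<in> sets M" and PB: "p \<le> measure M B" for B
  proof -
    have iB: "integrable M (indicator B :: 'a \<Rightarrow> real)" using Bs by (auto intro!: integrable_real_indicator simp: less_top[symmetric])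
    have iA: "integrable M (indicator A :: 'a \<Rightarrow> real)" using As by (auto intro!: integrable_real_indicator simp: less_top[symmetric])
    have "integral\<^sup>L M (\<lambda>\<omega>. k * (indicator B \<omega> - indicator A \<omega>))
        \<le> integral\<^sup>L M (\<lambda>\<omega>. w (X \<omega>) * indicator B \<omega> - w (X \<omega>) * indicator A \<omega>)"
    proof (rule integral_mono)
      show "integrable M (\<lambda>\<omega>. k * (indicator B \<omega> - indicator A \<omega>) :: real)"
        using iB iA by (intro integrable_mult_right Bochner_Integration.integrable_diff) auto
      show "integrable M (\<lambda>\<omega>. w (X \<omega>) * indicator B \<omega> - w (X \<omega>) * indicator A \<omega>)"
        using intWB[OF Bs] intWB[OF As] by (rule Bochner_Integration.integrable_diff)
      fix \<omega> assume "\<omega> \<in> space M"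
      then show "k * (indicator B \<omega> - indicator A \<omega>) \<le> w (X \<omega>) * indicator B \<omega> - w (X \<omega>) * indicator A \<omega>"
        using wD wnD unfolding A_def by (auto simp: indicator_def)
    qed
    also have "\<dots> = integral\<^sup>L M (\<lambda>\<omega>. w (X \<omega>) * indicator B \<omega>) - integral\<^sup>L M (\<lambda>\<omega>. w (X \<omega>) * indicator A \<omega>)"
      using intWB[OF Bs] intWB[OF As] by (rule Bochner_Integration.integral_diff)
    finally have "k * (measure M B - measure M A) \<le> integral\<^sup>L M (\<lambda>\<omega>. w (X \<omega>) * indicator B \<omega>) - integral\<^sup>L M (\<lambda>\<omega>. w (X \<omega>) * indicator A \<omega>)"
      using Bs As iA iB by (simp add: Bochner_Integration.integral_diff[OF iB iA] 
          sets.Int_space_eq2)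
    moreover have "0 \<le> k * (measure M B - measure M A)"
      using k0 PB PD unfolding A_def by simp
    ultimately show ?thesis by linarith
  qed
  have IWA: "integral\<^sup>L M (\<lambda>\<omega>. w (X \<omega>) * indicator A \<omega>) \<le> IX - x0"
  proof (rule field_le_epsilon)
    fix e :: real assume e: "0 < e"
    have "q < q + e" using e by simp
    then have "\<exists>v\<in>?V ` ?G. v < q + e"
      unfolding q_def using cInf_less_iff[OF Vne Vbdd] by blast
    then obtain g where g: "g \<in> ?G" and Vg: "?V g < q + e" by blast
    define c where "c = q + e"
    define B where "B = {\<omega>\<in>space M. g (X \<omega>) \<le> c}"
    have Bs: "B \<in> sets M" unfolding B_def using Gm[OF g] by measurable
    have PB: "p \<le> measure M B" unfolding B_def
      by (rule VaR_less[OF Gm[OF g] Gnn[OF g] p]) (use Vg c_def in simp)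
    have gAE: "AE \<omega> in M. 0 \<le> g (X \<omega>) \<and> g (X \<omega>) \<le> X \<omega>" and gx0: "x0 \<le> integral\<^sup>L M (\<lambda>\<omega>. \<gamma> (X \<omega>) * g (X \<omega>))"
      using g unfolding G_ns_def by auto
    have intg: "integrable M (\<lambda>\<omega>. \<gamma> (X \<omega>) * g (X \<omega>))"
    proof (rule intb)
      show "(\<lambda>\<omega>. \<gamma> (X \<omega>) * g (X \<omega>)) \<in> borel_measurable M" using Gm[OF g] gb X by measurable
      show "AE \<omega> in M. \<bar>\<gamma> (X \<omega>) * g (X \<omega>)\<bar> \<le> \<gamma> (X \<omega>) * X \<omega>"
        using gAE by eventually_elim (auto simp: abs_mult abs_of_pos[OF gpos] intro!: mult_left_mono less_imp_le[OF gpos])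
    qed
    have intR: "integrable M (\<lambda>\<omega>. \<gamma> (X \<omega>) * X \<omega> - w (X \<omega>) * indicator B \<omega> + e * \<gamma> (X \<omega>))"
      using intGX intWB[OF Bs] intG by auto
    have "x0 \<le> integral\<^sup>L M (\<lambda>\<omega>. \<gamma> (X \<omega>) * g (X \<omega>))" by (rule gx0)
    also have "\<dots> \<le> integral\<^sup>L M (\<lambda>\<omega>. \<gamma> (X \<omega>) * X \<omega> - w (X \<omega>) * indicator B \<omega> + e * \<gamma> (X \<omega>))"
    proof (rule integral_mono_AE[OF intg intR])
      show "AE \<omega> in M. \<gamma> (X \<omega>) * g (X \<omega>) \<le> \<gamma> (X \<omega>) * X \<omega> - w (X \<omega>) * indicator B \<omega> + e * \<gamma> (X \<omega>)"
        using gAE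
      proof eventually_elim
        case (elim \<omega>)
        have "g (X \<omega>) \<le> X \<omega> - max (X \<omega> - q) 0 * indicator B \<omega> + e"
        proof (cases "\<omega> \<in> B")
          case True
          then have "g (X \<omega>) \<le> c" unfolding B_def by simp
          then show ?thesis using True elim e unfolding c_def by (auto simp: indicator_def)
        next
          case False then show ?thesis using elim e by (auto simp: indicator_def)
        qed
        then have "\<gamma> (X \<omega>) * g (X \<omega>) \<le> \<gamma> (X \<omega>) * (X \<omega> - max (X \<omega> - q) 0 * indicator B \<omega> + e)"
          using gpos[of "X \<omega>"] by (intro mult_left_mono) auto
        then show ?case unfolding w_def by (simp add: algebra_simps)
      qed
    qed
    also have "\<dots> = IX - integral\<^sup>L M (\<lambda>\<omega>. w (X \<omega>) * indicator B \<omega>) + e"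
      unfolding IX_def using intGX intWB[OF Bs] intG Eg by simp
    finally have "integral\<^sup>L M (\<lambda>\<omega>. w (X \<omega>) * indicator B \<omega>) \<le> IX - x0 + e" by simp
    then show "integral\<^sup>L M (\<lambda>\<omega>. w (X \<omega>) * indicator A \<omega>) \<le> IX - x0 + e"
      using NP[OF Bs PB] by simp
  qed
  define gs where "gs x = (if x \<in> D then min x q else x)" for x
  have gsb: "gs \<in> borel_measurable borel" unfolding gs_def using Db by measurable
  have gs_eq: "\<gamma> (X \<omega>) * gs (X \<omega>) = \<gamma> (X \<omega>) * X \<omega> - w (X \<omega>) * indicator A \<omega>"
    if "\<omega> \<in> space M" for \<omega>
    using that unfolding gs_def w_def A_def by (auto simp: indicator_def algebra_simps min_def max_def)
  have "integral\<^sup>L M (\<lambda>\<omega>. \<gamma> (X \<omega>) * gs (X \<omega>)) = integral\<^sup>L M (\<lambda>\<omega>. \<gamma> (X \<omega>) * X \<omega> - w (X \<omega>) * indicator A \<omega>)"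
    using gs_eq by (rule Bochner_Integration.integral_cong[OF refl])
  also have "\<dots> = IX - integral\<^sup>L M (\<lambda>\<omega>. w (X \<omega>) * indicator A \<omega>)"
    unfolding IX_def using intGX intWB[OF As] by simp
  finally have gs_int: "x0 \<le> integral\<^sup>L M (\<lambda>\<omega>. \<gamma> (X \<omega>) * gs (X \<omega>))" using IWA by simp
  have gsG: "gs \<in> ?G"
    unfolding G_ns_def using gsb gs_int Xnn q0 by (auto simp: gs_def intro!: AE_I2)
  have Vgs: "?V gs \<le> q"
  proof (rule VaR_le[OF Gm[OF gsG] Gnn[OF gsG] p])
    have "measure M A \<le> measure M {\<omega>\<in>space M. gs (X \<omega>) \<le> q}"
      by (rule finite_measure_mono) (use Gm[OF gsG] in \<open>auto simp: A_def gs_def\<close>)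
    then show "p \<le> measure M {\<omega>\<in>space M. gs (X \<omega>) \<le> q}" using PD unfolding A_def by simp
  qed
  have part1: "\<exists>g\<in>?G. \<forall>h\<in>?G. ?V g \<le> ?V h"
    using gsG Vgs q_le by (meson order_trans)
  define t where "t = VaR M p X"
  have Xm_nn: "AE \<omega> in M. 0 \<le> X \<omega>" using Xnn by simp
  have Pt: "p \<le> measure M {\<omega>\<in>space M. X \<omega> \<le> t}" unfolding t_def by (rule VaR_attained[OF X Xm_nn p])
  have t0: "0 < t"
  proof (rule ccontr)
    assume "\<not> 0 < t"
    then have "measure M {\<omega>\<in>space M. X \<omega> \<le> t} \<le> measure M {\<omega>\<in>space M. X \<omega> = 0}"
      using Xnn X by (intro finite_measure_mono) force+
    also have "\<dots> = 0" by (rule no_atom[OF assms(6)])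
    finally show False using Pt p by simp
  qed
  define \<delta> where "\<delta> = (IX - x0) / 2"
  have d0: "0 < \<delta>" unfolding \<delta>_def using x0IX by simp
  define c where "c = max 0 (t - \<delta>)"
  have c0: "0 \<le> c" and ct: "c < t" unfolding c_def using t0 d0 by auto
  define g2 where "g2 x = (if x \<le> t then min x c else x)" for x
  have g2b: "g2 \<in> borel_measurable borel" unfolding g2_def by measurable
  have intg2: "integrable M (\<lambda>\<omega>. \<gamma> (X \<omega>) * g2 (X \<omega>))"
  proof (rule intb)
    show "(\<lambda>\<omega>. \<gamma> (X \<omega>) * g2 (X \<omega>)) \<in> borel_measurable M" using g2b gb X by measurable
    show "AE \<omega> in M. \<bar>\<gamma> (X \<omega>) * g2 (X \<omega>)\<bar> \<le> \<gamma> (X \<omega>) * X \<omega>"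
      using Xnn c0 by (intro AE_I2) (auto simp: abs_mult abs_of_pos[OF gpos] g2_def intro!: mult_left_mono less_imp_le[OF gpos])
  qed
  have "x0 = IX - \<delta> * integral\<^sup>L M (\<lambda>\<omega>. \<gamma> (X \<omega>)) - \<delta>" using Eg unfolding \<delta>_def by simp
  also have "\<dots> \<le> IX - \<delta> * integral\<^sup>L M (\<lambda>\<omega>. \<gamma> (X \<omega>))" using d0 by simp
  also have "\<dots> = integral\<^sup>L M (\<lambda>\<omega>. \<gamma> (X \<omega>) * X \<omega> - \<delta> * \<gamma> (X \<omega>))"
    unfolding IX_def using intGX intG by simp
  also have "\<dots> \<le> integral\<^sup>L M (\<lambda>\<omega>. \<gamma> (X \<omega>) * g2 (X \<omega>))"
  proof (rule integral_mono)
    show "integrable M (\<lambda>\<omega>. \<gamma> (X \<omega>) * X \<omega> - \<delta> * \<gamma> (X \<omega>))" using intGX intG by auto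
    show "integrable M (\<lambda>\<omega>. \<gamma> (X \<omega>) * g2 (X \<omega>))" by (rule intg2)
    fix \<omega> assume "\<omega> \<in> space M"
    have "X \<omega> - \<delta> \<le> g2 (X \<omega>)" unfolding g2_def c_def using d0 by auto
    then have "\<gamma> (X \<omega>) * (X \<omega> - \<delta>) \<le> \<gamma> (X \<omega>) * g2 (X \<omega>)"
      using gpos[of "X \<omega>"] by (intro mult_left_mono) auto
    then show "\<gamma> (X \<omega>) * X \<omega> - \<delta> * \<gamma> (X \<omega>) \<le> \<gamma> (X \<omega>) * g2 (X \<omega>)" by (simp add: algebra_simps)
  qed
  finally have g2int: "x0 \<le> integral\<^sup>L M (\<lambda>\<omega>. \<gamma> (X \<omega>) * g2 (X \<omega>))" .
  have g2G: "g2 \<in> ?G"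
    unfolding G_ns_def using g2b g2int Xnn c0 by (auto simp: g2_def intro!: AE_I2)
  have "?V g2 \<le> c"
  proof (rule VaR_le[OF Gm[OF g2G] Gnn[OF g2G] p])
    have "measure M {\<omega>\<in>space M. X \<omega> \<le> t} \<le> measure M {\<omega>\<in>space M. g2 (X \<omega>) \<le> c}"
      by (rule finite_measure_mono) (use Gm[OF g2G] in \<open>auto simp: g2_def\<close>)
    then show "p \<le> measure M {\<omega>\<in>space M. g2 (X \<omega>) \<le> c}" using Pt by simp
  qed
  then have "q < t" using q_le[OF g2G] ct by simp
  then show ?thesis using part1 unfolding q_def t_def by simp
qed

end
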